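(* Let $p$ be an odd prime. Then $$\sum_{k=0}^{\frac{p-1}2}\frac{k^2\binom{2k}k^2}{32^k}\equiv\begin{cases}(-1)^{\frac{p+3}4}2^{-\frac{p-1}2}\dfrac{(\frac{p+3}2)!}{(\frac{p-5}4)!\,(\frac{p+3}4)!}\pmod{p^2}&\text{if }p\equiv1\pmod 4,\\ (-1)^{\frac{p+1}4}2^{-\frac{p-1}2}\dfrac{(\frac{p+1}2)!}{(\frac{p-3}4)!\,(\frac{p+1}4)!}\pmod{p^2}&\text{if }p\equiv3\pmod4.\end{cases}$$
   Context: Congruences are between rational numbers whose denominators are prime to $p$. *)

theory Defs
  imports "HOL-Number_Theory.Number_Theory"
begin

definition p_integral :: "nat \<Rightarrow> rat \<Rightarrow> bool" where
  "p_integral p x \<longleftrightarrow> coprime (snd (quotient_of x)) (int p)"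

definition rat_cong :: "nat \<Rightarrow> rat \<Rightarrow> rat \<Rightarrow> int \<Rightarrow> bool" where
  "rat_cong p a b m \<longleftrightarrow> p_integral p ((a - b) / of_int m)"

end

theory Submission
  imports Defs
begin


definition pint :: "nat \<Rightarrow> rat \<Rightarrow> bool" where
  "pint p x \<longleftrightarrow> (\<exists>a b. b \<noteq> 0 \<and> coprime b (int p) \<and> x = of_int a / of_int b)"

lemma pint_imp_p_integral:
  assumes "pint p x" shows "p_integral p x"
proof -
  obtain a b where b: "b \<noteq> 0" "coprime b (int p)" "x = of_int a / of_int b"
    using assms unfolding pint_def by blast
  obtain a' b' where q: "quotient_of x = (a', b')" by (cases "quotient_of x")
  have b'pos: "b' > 0" using quotient_of_denom_pos[OF q] .
  have cop: "coprime a' b'" using quotient_of_coprime[OF q] .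
  have x': "x = of_int a' / of_int b'" using quotient_of_div[OF q] .
  have "of_int a' * of_int b = (of_int a * of_int b' :: rat)"
    using b x' b'pos by (simp add: field_simps)
  hence "a' * b = a * b'" by (metis of_int_eq_iff of_int_mult)
  hence "b' dvd a' * b" by (metis dvd_triv_right)
  hence "b' dvd b" using cop by (metis coprime_commute coprime_dvd_mult_right_iff)
  hence "coprime b' (int p)" using b(2) by (meson coprime_divisors dvd_refl)
  thus ?thesis unfolding p_integral_def q by simp
qed

lemma pint_frac: "b \<noteq> 0 \<Longrightarrow> coprime b (int p) \<Longrightarrow> pint p (of_int a / of_int b)"
  unfolding pint_def by blast

lemma pint_int: "pint p (of_int a)"
  using pint_frac[of 1 p a] by simp

lemma pint_nat: "pint p (of_nat a)"
  using pint_int[of p "int a"] by simp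

lemma pint_mult: assumes "pint p x" "pint p y" shows "pint p (x * y)"
proof -
  obtain a b where b: "b \<noteq> 0" "coprime b (int p)" "x = of_int a / of_int b"
    using assms(1) unfolding pint_def by blast
  obtain c d where d: "d \<noteq> 0" "coprime d (int p)" "y = of_int c / of_int d"
    using assms(2) unfolding pint_def by blast
  have "x * y = of_int (a*c) / of_int (b*d)" using b d by simp
  moreover have "coprime (b*d) (int p)" using b d by simp
  ultimately show ?thesis using b d pint_frac[of "b*d" p "a*c"] by simp
qed

lemma pint_add: assumes "pint p x" "pint p y" shows "pint p (x + y)"
proof -
  obtain a b where b: "b \<noteq> 0" "coprime b (int p)" "x = of_int a / of_int b"
    using assms(1) unfolding pint_def by blast
  obtain c d where d: "d \<noteq> 0" "coprime d (int p)" "y = of_int c / of_int d"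
    using assms(2) unfolding pint_def by blast
  have "x + y = of_int (a*d + c*b) / of_int (b*d)" using b d by (simp add: field_simps)
  moreover have "coprime (b*d) (int p)" using b d by simp
  ultimately show ?thesis using b d pint_frac[of "b*d" p "a*d + c*b"] by simp
qed

lemma pint_uminus: assumes "pint p x" shows "pint p (- x)"
  using pint_mult[OF pint_int[of p "-1"] assms] by simp

lemma pint_diff: assumes "pint p x" "pint p y" shows "pint p (x - y)"
  using pint_add[OF assms(1) pint_uminus[OF assms(2)]] by simp

lemma pint_sum: "(\<And>i. i \<in> A \<Longrightarrow> pint p (f i)) \<Longrightarrow> pint p (sum f A)"
  by (induction A rule: infinite_finite_induct) (auto simp: pint_int[of p 0, simplified] pint_add)

lemma pint_inv_nat:
  assumes "prime p" "0 < j" "j < p" shows "pint p (1 / of_nat j)"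
proof -
  have "coprime (int j) (int p)"
    using assms by (metis coprime_commute nat_dvd_not_less prime_imp_coprime coprime_int_iff)
  thus ?thesis using pint_frac[of "int j" p 1] assms by simp
qed

lemma pint_inv_pow2:
  assumes "prime p" "odd p" shows "pint p (1 / 2^k)"
proof -
  have "coprime (2::int) (int p)"
  proof -
    have "coprime (2::nat) p" using assms
      using prime_imp_coprime[OF two_is_prime_nat, of p] by simp
    thus ?thesis by (metis coprime_int_iff of_nat_numeral)
  qed
  hence "coprime ((2::int)^k) (int p)" by simp
  thus ?thesis using pint_frac[of "2^k" p 1] by simp
qed

definition cg :: "nat \<Rightarrow> rat \<Rightarrow> bool" where
  "cg p d \<longleftrightarrow> (\<exists>c. pint p c \<and> d = of_nat (p^2) * c)"

lemma cg_imp_rat_cong: assumes "prime p" "cg p (a - b)" shows "rat_cong p a b (int p^2)"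
proof -
  obtain c where c: "pint p c" "a - b = of_nat (p^2) * c" using assms(2) cg_def by blast
  have "p > 0" using assms(1) prime_gt_0_nat by blast
  hence "(a - b) / of_int (int p^2) = c" using c by simp
  thus ?thesis unfolding rat_cong_def using pint_imp_p_integral c by simp
qed

lemma cg_add: "cg p x \<Longrightarrow> cg p y \<Longrightarrow> cg p (x + y)"
  unfolding cg_def by (metis pint_add distrib_left)

lemma cg_sum: "(\<And>i. i \<in> A \<Longrightarrow> cg p (f i)) \<Longrightarrow> cg p (sum f A)"
  apply (induction A rule: infinite_finite_induct)
  apply (auto simp: cg_add)
  apply (metis cg_def mult_zero_right pint_int of_int_0)+
  done

lemma cg_mult: "cg p x \<Longrightarrow> pint p y \<Longrightarrow> cg p (y * x)"
  unfolding cg_def by (metis pint_mult mult.left_commute)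

lemma cg_prod:
  fixes k :: nat
  assumes "\<And>j. j < k \<Longrightarrow> pint p (a j) \<and> pint p (b j) \<and> cg p (a j - b j)"
  shows "cg p ((\<Prod>j<k. a j) - (\<Prod>j<k. b j))"
  using assms
proof (induction k arbitrary: )
  case 0 then show ?case by (simp add: cg_def) (metis pint_int of_int_0)
next
  case (Suc k)
  have IH: "cg p ((\<Prod>j<k. a j) - (\<Prod>j<k. b j))" using Suc by simp
  have pb: "pint p (\<Prod>j<k. b j)"
    using Suc.prems by (induction k) (auto intro: pint_mult simp: pint_int[of p 1, simplified])
  have "(\<Prod>j<Suc k. a j) - (\<Prod>j<Suc k. b j)
     = a k * ((\<Prod>j<k. a j) - (\<Prod>j<k. b j)) + (\<Prod>j<k. b j) * (a k - b k)"
    by (simp add: algebra_simps)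
  thus ?case using cg_add cg_mult IH pb Suc.prems by simp
qed



definition Ar :: "rat \<Rightarrow> nat \<Rightarrow> rat" where
  "Ar x k = pochhammer (x - of_nat k + 1) (2*k) / (fact k)^2"

lemma Ar_0[simp]: "Ar x 0 = 1" by (simp add: Ar_def)

lemma poch2: "pochhammer z (Suc (Suc m)) = z * (z+1) * pochhammer (z+2) m"
proof -
  have "pochhammer z (Suc (Suc m)) = z * ((z+1) * pochhammer (z+1+1) m)"
    by (simp add: pochhammer_rec)
  also have "z+1+1 = z+2" by (simp add: add.assoc one_add_one)
  finally show ?thesis by (simp add: algebra_simps)
qed

lemma poch2': "pochhammer z (Suc (Suc m)) = pochhammer z m * (z + of_nat m) * (z + of_nat m + 1)"
  by (simp add: pochhammer_rec' algebra_simps)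

lemma Ar_Suc: "of_nat (Suc k)^2 * Ar x (Suc k) = (x - of_nat k) * (x + of_nat k + 1) * Ar x k"
proof -
  have "pochhammer (x - of_nat (Suc k) + 1) (2 * Suc k)
      = (x - of_nat k) * (x - of_nat k + 1) * pochhammer (x - of_nat k + 2) (2*k)"
    using poch2[of "x - of_nat k" "2*k"] by (simp add: algebra_simps)
  also have "\<dots> = (x - of_nat k) * pochhammer (x - of_nat k + 1) (2*k+1)"
    by (simp add: pochhammer_rec algebra_simps)
  also have "\<dots> = (x - of_nat k) * (pochhammer (x - of_nat k + 1) (2*k) * (x + of_nat k + 1))"
    by (simp add: pochhammer_rec' algebra_simps)
  finally have e: "pochhammer (x - of_nat (Suc k) + 1) (2 * Suc k) = (x - of_nat k) * (x + of_nat k + 1) * pochhammer (x - of_nat k + 1) (2*k)" by simp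
  have ff: "(fact (Suc k) :: rat)^2 = (of_nat (Suc k))^2 * (fact k)^2"
    unfolding fact_Suc by (simp add: power_mult_distrib)
  have nz: "(of_nat (Suc k) :: rat)^2 \<noteq> 0" by (simp del: of_nat_Suc)
  show ?thesis unfolding Ar_def e ff using nz by (simp add: field_simps del: of_nat_Suc)
qed

lemma Ar_vanish: assumes "n < k" shows "Ar (of_nat n) k = 0"
proof -
  have "pochhammer (of_nat n - of_nat k + 1 :: rat) (2*k) = 0"
    unfolding pochhammer_eq_0_iff
    by (rule exI[of _ "k - n - 1"]) (use assms in \<open>auto simp: of_nat_diff\<close>)
  thus ?thesis by (simp add: Ar_def)
qed

lemma L1: "(x+2) * Ar (x+2) (Suc j) + (x+1) * Ar x (Suc j)
   = (2*x+3) * (Ar (x+1) (Suc j) + 2 * Ar (x+1) j)"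
proof -
  define z where "z = x - of_nat j + 2"
  define P where "P = pochhammer z (2*j)"
  define F where "F = (fact j :: rat)^2"
  have F: "F \<noteq> 0" unfolding F_def by simp
  have e1: "pochhammer (x + 2 - of_nat (Suc j) + 1) (2 * Suc j) = P * (z + 2*of_nat j) * (z + 2*of_nat j + 1)"
    unfolding P_def z_def using poch2'[of "x - of_nat j + 2" "2*j"] by (simp add: algebra_simps)
  have e2: "pochhammer (x - of_nat (Suc j) + 1) (2 * Suc j) = (z-2)*(z-1)*P"
    unfolding P_def z_def using poch2[of "x - of_nat j" "2*j"] by (simp add: algebra_simps)
  have e3: "pochhammer (x + 1 - of_nat (Suc j) + 1) (2 * Suc j) = (z-1)*(z+2*of_nat j)*P"
  proof -
    have "pochhammer (z-1) (Suc (2*j+1)) = (z-1) * pochhammer z (Suc (2*j))"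
      by (simp add: pochhammer_rec)
    also have "\<dots> = (z-1) * (pochhammer z (2*j) * (z + of_nat (2*j)))"
      by (simp add: pochhammer_rec')
    finally show ?thesis unfolding P_def z_def by (simp add: algebra_simps)
  qed
  have e4: "pochhammer (x + 1 - of_nat j + 1) (2 * j) = P"
    unfolding P_def z_def by (simp add: algebra_simps)
  have ff: "(fact (Suc j) :: rat)^2 = (of_nat j + 1)^2 * F"
    unfolding F_def fact_Suc by (simp add: power_mult_distrib mult.commute add.commute)
  have poly: "(x+2)*(z+2*of_nat j)*(z+2*of_nat j+1) + (x+1)*(z-2)*(z-1)
     = (2*x+3)*((z-1)*(z+2*of_nat j) + 2*(of_nat j+1)^2)"
    unfolding z_def by (simp add: algebra_simps power2_eq_square)
  have pos: "(of_nat j + 1 :: rat) \<noteq> 0" by (metis of_nat_Suc of_nat_neq_0 add.commute)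
  define D where "D = (of_nat j + 1)^2 * F"
  have D: "D \<noteq> 0" unfolding D_def using F pos by simp
  have "(x+2) * Ar (x+2) (Suc j) + (x+1) * Ar x (Suc j) = (P / D) *
     ((x+2)*(z+2*of_nat j)*(z+2*of_nat j+1) + (x+1)*(z-2)*(z-1))"
    unfolding Ar_def e1 e2 ff D_def[symmetric] using D by (simp add: field_simps)
  also have "\<dots> = (P / D) * ((2*x+3)*((z-1)*(z+2*of_nat j) + 2*(of_nat j+1)^2))"
    using poly by simp
  also have "\<dots> = (2*x+3) * (Ar (x+1) (Suc j) + 2 * Ar (x+1) j)"
    unfolding Ar_def e3 e4 ff D_def[symmetric] F_def[symmetric] using D F pos
    by (simp add: field_simps D_def)
  finally show ?thesis .
qed



lemma L2: "of_nat (Suc j) * (Ar (x+2) (Suc j) - Ar x (Suc j)) = 2*(2*x+3) * Ar (x+1) j"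
proof -
  define z where "z = x - of_nat j + 2"
  define P where "P = pochhammer z (2*j)"
  define F where "F = (fact j :: rat)^2"
  have F: "F \<noteq> 0" unfolding F_def by simp
  have e1: "pochhammer (x + 2 - of_nat (Suc j) + 1) (2 * Suc j) = P * (z + 2*of_nat j) * (z + 2*of_nat j + 1)"
    unfolding P_def z_def using poch2'[of "x - of_nat j + 2" "2*j"] by (simp add: algebra_simps)
  have e2: "pochhammer (x - of_nat (Suc j) + 1) (2 * Suc j) = (z-2)*(z-1)*P"
    unfolding P_def z_def using poch2[of "x - of_nat j" "2*j"] by (simp add: algebra_simps)
  have e4: "pochhammer (x + 1 - of_nat j + 1) (2 * j) = P"
    unfolding P_def z_def by (simp add: algebra_simps)
  have ff: "(fact (Suc j) :: rat)^2 = (of_nat j + 1)^2 * F"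
    unfolding F_def fact_Suc by (simp add: power_mult_distrib mult.commute add.commute)
  have poly: "(z+2*of_nat j)*(z+2*of_nat j+1) - (z-2)*(z-1) = 2*(2*x+3)*(of_nat j+1)"
    unfolding z_def by (simp add: algebra_simps power2_eq_square)
  have pos: "(of_nat j + 1 :: rat) \<noteq> 0" by (metis of_nat_Suc of_nat_neq_0 add.commute)
  have "of_nat (Suc j) * (Ar (x+2) (Suc j) - Ar x (Suc j)) = (P / ((of_nat j + 1)^2*F)) *
     ((of_nat j + 1) * ((z+2*of_nat j)*(z+2*of_nat j+1) - (z-2)*(z-1)))"
    unfolding Ar_def e1 e2 ff using F pos by (simp add: field_simps)
  also have "\<dots> = (P / ((of_nat j + 1)^2*F)) * ((of_nat j + 1) * (2*(2*x+3)*(of_nat j+1)))"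
    using poly by simp
  also have "\<dots> = 2*(2*x+3) * (P / F)"
  proof -
    define a where "a = (of_nat j + 1 :: rat)"
    have a: "a \<noteq> 0" using pos a_def by simp
    have "P / (a^2*F) * (a * (2*(2*x+3)*a)) = 2*(2*x+3) * (P / F)"
      using a F by (simp add: field_simps power2_eq_square)
    thus ?thesis unfolding a_def .
  qed
  also have "\<dots> = 2*(2*x+3) * Ar (x+1) j"
    unfolding Ar_def e4 F_def by simp
  finally show ?thesis .
qed

definition Ms :: "(nat \<Rightarrow> rat) \<Rightarrow> nat \<Rightarrow> nat \<Rightarrow> rat" where
  "Ms w n N = (\<Sum>k<N. w k * Ar (of_nat n) k * (-1/2)^k)"

lemma Ms_ext: assumes "n < N" shows "Ms w n N = Ms w n (Suc n)"
  unfolding Ms_def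
  by (rule sum.mono_neutral_right) (use assms Ar_vanish in auto)

definition "M0 n = Ms (\<lambda>k. 1) n (Suc n)"
definition "M1 n = Ms (\<lambda>k. of_nat k) n (Suc n)"
definition "M2 n = Ms (\<lambda>k. (of_nat k)^2) n (Suc n)"

lemma M0_rec: "(of_nat n + 2) * M0 (n+2) + (of_nat n + 1) * M0 n = 0"
proof -
  define x :: rat where "x = of_nat n"
  define N where "N = n + 2"
  define g where "g k = Ar (x+1) k * (-1/2)^k" for k
  have a: "M0 (n+2) = (\<Sum>k<Suc N. Ar (x+2) k * (-1/2)^k)"
    unfolding M0_def Ms_def N_def x_def by (simp add: add.commute)
  have b: "M0 n = (\<Sum>k<Suc N. Ar x k * (-1/2)^k)"
    unfolding M0_def using Ms_ext[of n "Suc N" "\<lambda>k. 1"] unfolding Ms_def N_def x_def by simp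
  have "(of_nat n + 2) * M0 (n+2) + (of_nat n + 1) * M0 n
     = (\<Sum>k<Suc N. ((x+2) * Ar (x+2) k + (x+1) * Ar x k) * (-1/2)^k)"
    unfolding a b x_def by (simp add: sum_distrib_left sum.distrib algebra_simps)
  also have "\<dots> = (2*x+3) + (\<Sum>k<N. ((x+2) * Ar (x+2) (Suc k) + (x+1) * Ar x (Suc k)) * (-1/2)^(Suc k))"
    by (subst sum.lessThan_Suc_shift) simp
  also have "(\<Sum>k<N. ((x+2) * Ar (x+2) (Suc k) + (x+1) * Ar x (Suc k)) * (-1/2)^(Suc k))
      = (\<Sum>k<N. (2*x+3) * (g (Suc k) - g k))"
  proof (rule sum.cong)
    fix k assume "k \<in> {..<N}"
    have "((x+2) * Ar (x+2) (Suc k) + (x+1) * Ar x (Suc k)) * (-1/2)^(Suc k)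
        = ((2*x+3) * (Ar (x+1) (Suc k) + 2 * Ar (x+1) k)) * (-1/2)^(Suc k)"
      by (simp only: L1)
    also have "\<dots> = (2*x+3) * (g (Suc k) - g k)"
      unfolding g_def by (simp add: algebra_simps)
    finally show "((x+2) * Ar (x+2) (Suc k) + (x+1) * Ar x (Suc k)) * (-1/2)^(Suc k) = (2*x+3) * (g (Suc k) - g k)" .
  qed simp
  also have "\<dots> = (2*x+3) * (g N - g 0)"
    by (simp add: sum_distrib_left[symmetric] sum_lessThan_telescope)
  also have "g N = 0"
  proof -
    have hx: "x + 1 = of_nat (Suc n)" unfolding x_def by simp
    show ?thesis unfolding g_def hx using Ar_vanish[of "Suc n" N] N_def by simp
  qed
  finally show ?thesis by (simp add: g_def)
qed

lemma M1_rec: "M1 (n+2) - M1 n = - (2 * of_nat n + 3) * M0 (n+1)"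
proof -
  define x :: rat where "x = of_nat n"
  define N where "N = n + 2"
  have a: "M1 (n+2) = (\<Sum>k<Suc N. of_nat k * Ar (x+2) k * (-1/2)^k)"
    unfolding M1_def Ms_def N_def x_def by (simp add: add.commute)
  have b: "M1 n = (\<Sum>k<Suc N. of_nat k * Ar x k * (-1/2)^k)"
    unfolding M1_def using Ms_ext[of n "Suc N" "\<lambda>k. of_nat k"] unfolding Ms_def N_def x_def by simp
  have hx1: "(of_nat (n+1) :: rat) = x + 1" unfolding x_def by simp
  have c: "M0 (n+1) = (\<Sum>k<N. Ar (x+1) k * (-1/2)^k)"
    unfolding M0_def Ms_def N_def hx1 by simp
  have "M1 (n+2) - M1 n = (\<Sum>k<Suc N. of_nat k * (Ar (x+2) k - Ar x k) * (-1/2)^k)"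
    unfolding a b sum_subtractf[symmetric] by (rule sum.cong) (simp_all add: algebra_simps)
  also have "\<dots> = (\<Sum>k<N. of_nat (Suc k) * (Ar (x+2) (Suc k) - Ar x (Suc k)) * (-1/2)^(Suc k))"
    by (subst sum.lessThan_Suc_shift) simp
  also have "\<dots> = (\<Sum>k<N. - (2*x+3) * (Ar (x+1) k * (-1/2)^k))"
  proof (rule sum.cong)
    fix k assume "k \<in> {..<N}"
    have "of_nat (Suc k) * (Ar (x+2) (Suc k) - Ar x (Suc k)) * (-1/2)^(Suc k)
       = (2*(2*x+3) * Ar (x+1) k) * (-1/2)^(Suc k)"
      by (simp only: L2)
    also have "\<dots> = - (2*x+3) * (Ar (x+1) k * (-1/2)^k)" by (simp add: algebra_simps)
    finally show "of_nat (Suc k) * (Ar (x+2) (Suc k) - Ar x (Suc k)) * (-1/2)^(Suc k) = - (2*x+3) * (Ar (x+1) k * (-1/2)^k)" .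
  qed simp
  also have "\<dots> = - (2 * of_nat n + 3) * M0 (n+1)"
    unfolding c x_def by (simp add: sum_distrib_left)
  finally show ?thesis .
qed

lemma M2_eq: "M2 n = M1 n - of_nat n * (of_nat n + 1) * M0 n"
proof -
  define x :: rat where "x = of_nat n"
  have a: "M2 n = (\<Sum>k<Suc (Suc n). (of_nat k)^2 * Ar x k * (-1/2)^k)"
    unfolding M2_def using Ms_ext[of n "Suc (Suc n)" "\<lambda>k. (of_nat k)^2"] unfolding Ms_def x_def by simp
  also have "\<dots> = (\<Sum>k<Suc n. (of_nat (Suc k))^2 * Ar x (Suc k) * (-1/2)^(Suc k))"
    by (subst sum.lessThan_Suc_shift) simp
  also have "\<dots> = (\<Sum>k<Suc n. (-1/2) * ((x * (x+1) - of_nat k - (of_nat k)^2) * Ar x k * (-1/2)^k))"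
  proof (rule sum.cong)
    fix k assume "k \<in> {..<Suc n}"
    have "(of_nat (Suc k))^2 * Ar x (Suc k) * (-1/2)^(Suc k) = (-1/2) * (((of_nat (Suc k))^2 * Ar x (Suc k)) * (-1/2)^k)"
      by (simp only: power_Suc mult_ac)
    also have "\<dots> = (-1/2) * (((x - of_nat k) * (x + of_nat k + 1) * Ar x k) * (-1/2)^k)"
      by (simp only: Ar_Suc)
    also have "\<dots> = (-1/2) * ((x * (x+1) - of_nat k - (of_nat k)^2) * Ar x k * (-1/2)^k)"
      by (simp add: algebra_simps power2_eq_square)
    finally show "(of_nat (Suc k))^2 * Ar x (Suc k) * (-1/2)^(Suc k) = (-1/2) * ((x * (x+1) - of_nat k - (of_nat k)^2) * Ar x k * (-1/2)^k)" .
  qed simp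
  also have "\<dots> = (\<Sum>k<Suc n. (-1/2)*(x*(x+1)) * (1 * Ar x k * (-1/2)^k) - (-1/2)*(of_nat k * Ar x k * (-1/2)^k) - (-1/2)*((of_nat k)^2 * Ar x k * (-1/2)^k))"
    by (rule sum.cong) (simp_all add: algebra_simps)
  also have "\<dots> = (-1/2)*(x*(x+1)) * (\<Sum>k<Suc n. 1 * Ar x k * (-1/2)^k) - (-1/2)*(\<Sum>k<Suc n. of_nat k * Ar x k * (-1/2)^k) - (-1/2)*(\<Sum>k<Suc n. (of_nat k)^2 * Ar x k * (-1/2)^k)"
    by (simp only: sum_subtractf sum_distrib_left)
  also have "\<dots> = (-1/2) * (x*(x+1) * M0 n - M1 n - M2 n)"
    unfolding M0_def M1_def M2_def Ms_def x_def by (simp add: algebra_simps)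
  finally have "M2 n = (-1/2) * (x*(x+1) * M0 n - M1 n - M2 n)" .
  thus ?thesis unfolding x_def by (simp add: algebra_simps)
qed



definition cb :: "nat \<Rightarrow> rat" where "cb m = fact (2*m) / (fact m)^2"

lemma cb_binom: "of_nat (2*m choose m) = cb m"
  unfolding cb_def using binomial_fact[of m "2*m"] by (simp add: mult_2 power2_eq_square)

lemma cb_Suc: "cb (Suc m) = cb m * (2*(2*of_nat m+1)) / (of_nat m + 1)"
proof -
  define a :: rat where "a = of_nat m + 1"
  define b :: rat where "b = 2*of_nat m+1"
  define F :: rat where "F = fact (2*m)"
  define G :: rat where "G = fact m"
  have f1: "(fact (2 * Suc m) :: rat) = (2*a) * b * F"
    unfolding a_def b_def F_def by (simp add: fact_Suc algebra_simps)
  have f2: "(fact (Suc m) :: rat) = a * G" unfolding a_def G_def by (simp add: fact_Suc algebra_simps)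
  have nz: "a \<noteq> 0" unfolding a_def by (metis of_nat_Suc of_nat_neq_0 add.commute)
  have G: "G \<noteq> 0" unfolding G_def by simp
  have "cb (Suc m) = (2*a) * b * F / (a*G)^2" unfolding cb_def f1 f2 ..
  also have "\<dots> = F / G^2 * (2*b) / a" using nz G by (simp add: field_simps power2_eq_square)
  finally show ?thesis unfolding cb_def F_def G_def a_def b_def .
qed

lemma M0_0: "M0 0 = 1" by (simp add: M0_def Ms_def)

lemma Ar_1_1: "Ar 1 (Suc 0) = 2"
  unfolding Ar_def by (simp add: pochhammer_rec numeral_2_eq_2)

lemma M0_1: "M0 1 = 0" unfolding M0_def Ms_def by (simp add: Ar_1_1)
lemma M0_1': "M0 (Suc 0) = 0" using M0_1 by simp
lemma M1_0: "M1 0 = 0" by (simp add: M1_def Ms_def)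
lemma M1_1: "M1 1 = -1" unfolding M1_def Ms_def by (simp add: Ar_1_1)
lemma M1_1': "M1 (Suc 0) = -1" using M1_1 by simp

lemma M0_closed: "M0 (2*m) = (-1)^m * cb m / 4^m \<and> M0 (2*m+1) = 0"
proof (induction m)
  case 0 then show ?case by (simp add: M0_0 M0_1' cb_def)
next
  case (Suc m)
  have r1: "(of_nat (2*m) + 2) * M0 (2*m+2) + (of_nat (2*m) + 1) * M0 (2*m) = 0"
    using M0_rec[of "2*m"] by simp
  have r2: "(of_nat (2*m+1) + 2) * M0 (2*m+1+2) + (of_nat (2*m+1) + 1) * M0 (2*m+1) = 0"
    using M0_rec[of "2*m+1"] by simp
  have nz: "(2 * of_nat m + 2 :: rat) \<noteq> 0"
  proof -
    have "(0::rat) \<le> of_nat m" by simp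
    thus ?thesis by linarith
  qed
  have a: "M0 (2*m+2) = - (2*of_nat m + 1) * M0 (2*m) / (2*of_nat m + 2)"
    using r1 nz by (simp add: field_simps)
  have b: "M0 (2*m+3) = 0"
  proof -
    have "(of_nat (2*m+1) + 2) * M0 (2*m+3) = 0" using r2 Suc.IH by (simp add: numeral_3_eq_3)
    moreover have "(of_nat (2*m+1) + 2 :: rat) \<noteq> 0"
    proof -
      have "(0::rat) \<le> of_nat (2*m+1)" by simp
      thus ?thesis by linarith
    qed
    ultimately show ?thesis by simp
  qed
  have "M0 (2 * Suc m) = (-1)^Suc m * cb (Suc m) / 4^Suc m"
  proof -
    have "M0 (2 * Suc m) = M0 (2*m+2)" by simp
    also have "\<dots> = - (2*of_nat m + 1) * ((-1)^m * cb m / 4^m) / (2*of_nat m + 2)"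
      using a Suc.IH by simp
    also have "\<dots> = (-1)^Suc m * cb (Suc m) / 4^Suc m"
    proof -
      have nz1: "(of_nat m + 1 :: rat) \<noteq> 0" by (metis of_nat_Suc of_nat_neq_0 add.commute)
      have q: "(4::rat)^m \<noteq> 0" by simp
      have e: "(2*of_nat m + 2 :: rat) = 2 * (of_nat m + 1)" by simp
      have aux: "\<And>(a::rat) q b s c. a \<noteq> 0 \<Longrightarrow> q \<noteq> 0 \<Longrightarrow>
         - b * (s*c/q)/(2*a) = (-s) * (c*(2*b)/a)/(4*q)" by (simp add: field_simps)
      have "- (2*of_nat m + 1) * ((-1)^m * cb m / 4^m) / (2*of_nat m + 2)
          = (- ((-1)^m)) * (cb m * (2*(2*of_nat m + 1)) / (of_nat m + 1)) / (4 * 4^m)"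
        unfolding e by (rule aux[OF nz1 q])
      also have "\<dots> = (-1)^Suc m * cb (Suc m) / 4^Suc m"
        unfolding cb_Suc by simp
      finally show ?thesis .
    qed
    finally show ?thesis .
  qed
  moreover have "M0 (2 * Suc m + 1) = 0" using b by (simp add: numeral_3_eq_3)
  ultimately show ?case by blast
qed

lemma M1_closed: "M1 (2*m) = 0 \<and> M1 (2*m+1) = - (2*of_nat m+1) * M0 (2*m)"
proof (induction m)
  case 0 then show ?case by (simp add: M1_0 M1_1' M0_0)
next
  case (Suc m)
  have r1: "M1 (2*m+2) - M1 (2*m) = - (2 * of_nat (2*m) + 3) * M0 (2*m+1)"
    using M1_rec[of "2*m"] by simp
  have r2: "M1 (2*m+1+2) - M1 (2*m+1) = - (2 * of_nat (2*m+1) + 3) * M0 (2*m+1+1)"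
    using M1_rec[of "2*m+1"] by simp
  have r3: "(of_nat (2*m) + 2) * M0 (2*m+2) + (of_nat (2*m) + 1) * M0 (2*m) = 0"
    using M0_rec[of "2*m"] by simp
  have e1: "M1 (2*m+2) = 0" using r1 Suc.IH M0_closed[of m] by simp
  have e2: "M1 (2*m+3) = - (2*of_nat m + 3) * M0 (2*m+2)"
  proof -
    have "M1 (2*m+3) = M1 (2*m+1) - (4 * of_nat m + 5) * M0 (2*m+2)"
      using r2 by (simp add: algebra_simps numeral_3_eq_3)
    also have "\<dots> = - (2*of_nat m+1) * M0 (2*m) - (4 * of_nat m + 5) * M0 (2*m+2)"
      using Suc.IH by simp
    also have "- (2*of_nat m+1) * M0 (2*m) = (2*of_nat m + 2) * M0 (2*m+2)"
      using r3 by (simp add: algebra_simps)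
    finally show ?thesis by (simp add: algebra_simps)
  qed
  show ?case using e1 e2 by (simp add: numeral_3_eq_3 algebra_simps)
qed

lemma T_even: "M2 (2*m) = - (2*of_nat m) * (2*of_nat m + 1) * ((-1)^m * cb m / 4^m)"
  using M2_eq[of "2*m"] M1_closed[of m] M0_closed[of m] by (simp add: algebra_simps)

lemma T_odd: "M2 (2*m+1) = - (2*of_nat m + 1) * ((-1)^m * cb m / 4^m)"
  using M2_eq[of "2*m+1"] M1_closed[of m] M0_closed[of m] by simp



lemma cb_prod: "(cb k)^2 / 16^k = (\<Prod>j<k. (2*of_nat j+1)^2 / (4*(of_nat j+1)^2))"
proof (induction k)
  case 0 then show ?case by (simp add: cb_def)
next
  case (Suc k)
  have nz: "(of_nat k + 1 :: rat) \<noteq> 0" by (metis of_nat_Suc of_nat_neq_0 add.commute)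
  have aux: "\<And>(c::rat) a b q. a \<noteq> 0 \<Longrightarrow> q \<noteq> 0 \<Longrightarrow>
     (c * (2*b)/a)^2/(16*q) = c^2/q * (b^2/(4*a^2))"
    by (simp add: field_simps power2_eq_square)
  have "(cb (Suc k))^2 / 16^Suc k = (cb k)^2/16^k * ((2*of_nat k+1)^2 / (4*(of_nat k+1)^2))"
    unfolding cb_Suc power_Suc[of "16::rat"] by (rule aux[OF nz]) simp
  thus ?case using Suc.IH by simp
qed

lemma Ar_prod: "(-1)^k * Ar x k = (\<Prod>j<k. ((2*of_nat j+1)^2 - (2*x+1)^2) / (4*(of_nat j+1)^2))"
proof (induction k)
  case 0 then show ?case by simp
next
  case (Suc k)
  have nz: "(of_nat k + 1 :: rat) \<noteq> 0" by (metis of_nat_Suc of_nat_neq_0 add.commute)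
  have e: "Ar x (Suc k) = (x - of_nat k) * (x + of_nat k + 1) / (of_nat k + 1)^2 * Ar x k"
    using Ar_Suc[of k x] nz by (simp add: field_simps)
  have "(-1)^Suc k * Ar x (Suc k) = ((-1)^k * Ar x k) * ((2*of_nat k+1)^2 - (2*x+1)^2) / (4*(of_nat k+1)^2)"
  proof -
    define D where "D = (of_nat k + 1 :: rat)^2"
    have D: "D \<noteq> 0" unfolding D_def using nz by simp
    have aux: "\<And>s u A. - s * (u / D * A) = (s*A) * (4*(-u)) / (4*D)"
      using D by (simp add: field_simps)
    have poly: "4*(- ((x - of_nat k) * (x + of_nat k + 1))) = (2*of_nat k+1)^2 - (2*x+1)^2"
      by (simp add: algebra_simps power2_eq_square)
    have "(-1)^Suc k * Ar x (Suc k) = - ((-1)^k) * ((x - of_nat k) * (x + of_nat k + 1) / D * Ar x k)"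
      unfolding e D_def by simp
    also have "\<dots> = ((-1)^k * Ar x k) * (4*(- ((x - of_nat k) * (x + of_nat k + 1)))) / (4*D)"
      by (rule aux)
    finally show ?thesis unfolding poly D_def .
  qed
  thus ?case using Suc.IH by simp
qed

lemma pint_inv4sq: assumes "prime p" "odd p" "j + 1 < p"
  shows "pint p (1 / (4 * (of_nat j + 1)^2))"
proof -
  have a: "pint p (1 / 2^2)" using pint_inv_pow2[OF assms(1,2)] .
  have b: "pint p (1 / of_nat (j+1))" using pint_inv_nat[OF assms(1), of "j+1"] assms(3) by simp
  have "1 / (4 * (of_nat j + 1)^2) = (1/2^2) * ((1 / of_nat (j+1)) * (1 / of_nat (j+1)) :: rat)"
    by (simp add: power2_eq_square field_simps)
  thus ?thesis using a b pint_mult by metis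
qed

lemma cong_main:
  assumes p: "prime p" "odd p" and n: "2*n+1 = p"
  shows "cg p ((\<Sum>k=0..n. of_nat (k^2 * (2*k choose k)^2) / 32^k) - M2 n)"
proof -
  define x :: rat where "x = of_nat n"
  have px: "(2*x+1) = of_nat p" unfolding x_def using n by (metis of_nat_1 of_nat_add of_nat_mult of_nat_numeral)
  define a where "a j = (2*of_nat j+1)^2 / (4*(of_nat j+1)^2 :: rat)" for j
  define b where "b j = ((2*of_nat j+1)^2 - (2*x+1)^2) / (4*(of_nat j+1)^2 :: rat)" for j
  have m2: "M2 n = (\<Sum>k<Suc n. (of_nat k)^2 * Ar x k * (-1/2)^k)"
    unfolding M2_def Ms_def x_def ..
  have s: "(\<Sum>k=0..n. of_nat (k^2 * (2*k choose k)^2) / 32^k) = (\<Sum>k<Suc n. of_nat (k^2 * (2*k choose k)^2) / (32::rat)^k)"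
    by (simp add: atLeast0AtMost lessThan_Suc_atMost)
  have trm: "cg p (of_nat (k^2 * (2*k choose k)^2) / 32^k - (of_nat k)^2 * Ar x k * (-1/2)^k)"
    if k: "k < Suc n" for k
  proof -
    have e: "of_nat (k^2 * (2*k choose k)^2) / 32^k - (of_nat k)^2 * Ar x k * (-1/2)^k
       = (of_nat (k^2) * (1 / 2^k)) * ((\<Prod>j<k. a j) - (\<Prod>j<k. b j))"
    proof -
      have pa: "(\<Prod>j<k. a j) = (cb k)^2 / 16^k" unfolding a_def cb_prod ..
      have pb: "(\<Prod>j<k. b j) = (-1)^k * Ar x k" unfolding b_def Ar_prod ..
      have e32: "(32::rat)^k = 2^k * 16^k" by (simp add: power_mult_distrib[symmetric])
      have ey: "((-1/2)::rat)^k = (-1)^k / 2^k" by (rule power_divide)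
      have en: "(of_nat (k^2 * (2*k choose k)^2) :: rat) = of_nat (k^2) * (cb k)^2"
        by (simp add: cb_binom[symmetric])
      have ek: "(of_nat k :: rat)^2 = of_nat (k^2)" by simp
      have aux: "\<And>(K::rat) c q r s A. q \<noteq> 0 \<Longrightarrow> r \<noteq> 0 \<Longrightarrow>
          K*c/(q*r) - K*A*(s/q) = (K*(1/q))*(c/r - s*A)"
        by (simp add: field_simps)
      show ?thesis unfolding pa pb e32 ey en ek by (rule aux) simp_all
    qed
    have "cg p ((\<Prod>j<k. a j) - (\<Prod>j<k. b j))"
    proof (rule cg_prod)
      fix j assume j: "j < k"
      have jp: "j + 1 < p" using j k n by linarith
      have c: "pint p (1 / (4 * (of_nat j + 1)^2))" using pint_inv4sq[OF p jp] .
      have ea: "a j = of_nat ((2*j+1)^2) * (1 / (4 * (of_nat j + 1)^2))" unfolding a_def by simp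
      have eb: "b j = (of_nat ((2*j+1)^2) - of_nat (p^2)) * (1 / (4 * (of_nat j + 1)^2))"
        unfolding b_def px by simp
      have eab: "a j - b j = of_nat (p^2) * (1 / (4 * (of_nat j + 1)^2))"
        unfolding ea eb by (simp add: algebra_simps)
      show "pint p (a j) \<and> pint p (b j) \<and> cg p (a j - b j)"
        using c eab unfolding ea eb cg_def
        by (meson pint_mult pint_nat pint_diff)
    qed
    moreover have "pint p (of_nat (k^2) * (1 / 2^k))"
      using pint_mult pint_nat pint_inv_pow2[OF p] by blast
    ultimately show ?thesis unfolding e using cg_mult by blast
  qed
  have "(\<Sum>k=0..n. of_nat (k^2 * (2*k choose k)^2) / 32^k) - M2 n
     = (\<Sum>k<Suc n. of_nat (k^2 * (2*k choose k)^2) / 32^k - (of_nat k)^2 * Ar x k * (-1/2)^k)"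
    unfolding s m2 sum_subtractf ..
  moreover have "cg p (\<Sum>k<Suc n. of_nat (k^2 * (2*k choose k)^2) / 32^k - (of_nat k)^2 * Ar x k * (-1/2)^k)"
    by (rule cg_sum) (use trm in blast)
  ultimately show ?thesis by (simp only:)
qed



theorem corollary2p1:
  fixes p :: nat
  assumes "prime p" and "odd p"
  shows "(p mod 4 = 1 \<longrightarrow>
           rat_cong p (\<Sum>k=0..(p - 1) div 2. of_nat (k^2 * (2*k choose k)^2) / 32^k)
             ((-1)^((p + 3) div 4) / 2^((p - 1) div 2) *
              (of_nat (fact ((p + 3) div 2)) /
               (of_nat (fact ((p - 5) div 4)) * of_nat (fact ((p + 3) div 4)))))
             (int p^2))
       \<and> (p mod 4 = 3 \<longrightarrow>
           rat_cong p (\<Sum>k=0..(p - 1) div 2. of_nat (k^2 * (2*k choose k)^2) / 32^k)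
             ((-1)^((p + 1) div 4) / 2^((p - 1) div 2) *
              (of_nat (fact ((p + 1) div 2)) /
               (of_nat (fact ((p - 3) div 4)) * of_nat (fact ((p + 1) div 4)))))
             (int p^2))"
proof (intro conjI impI)
  assume h: "p mod 4 = 1"
  define m where "m = p div 4"
  have pm: "p = 4*m+1" using h div_mult_mod_eq[of p 4] unfolding m_def by linarith
  have "m \<noteq> 0" using assms(1) pm by (metis mult_0_right add_0 not_prime_1)
  then obtain m' where m': "m = Suc m'" by (cases m) auto
  have d1: "(p - 1) div 2 = 2*m" "(p + 3) div 4 = m+1" "(p + 3) div 2 = 2*m+2"
    "(p - 5) div 4 = m'" using pm m' by auto
  have cg: "cg p ((\<Sum>k=0..2*m. of_nat (k^2 * (2*k choose k)^2) / 32^k) - M2 (2*m))"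
    using cong_main[OF assms, of "(p - 1) div 2"] d1(1) pm by simp
  define a :: rat where "a = of_nat m"
  define F :: rat where "F = fact (2*m)"
  define G :: rat where "G = fact m'"
  define s :: rat where "s = (-1)^m"
  define q :: rat where "q = 4^m"
  have a: "a \<noteq> 0" "a + 1 \<noteq> 0" unfolding a_def using m' by (simp_all del: of_nat_Suc)
  have G: "G \<noteq> 0" unfolding G_def by simp
  have q: "q \<noteq> 0" unfolding q_def by simp
  have f1: "(of_nat (fact (2*m+2)) :: rat) = (2*a+2)*(2*a+1)*F"
    unfolding a_def F_def by (simp add: fact_Suc algebra_simps numeral_2_eq_2)
  have f2: "(of_nat (fact (m+1)) :: rat) = (a+1)*a*G"
    unfolding a_def G_def m' by (simp add: fact_Suc algebra_simps)
  have f3: "(of_nat (fact m') :: rat) = G" unfolding G_def by simp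
  have cbm: "cb m = F / (a*G)^2"
    unfolding cb_def F_def a_def G_def m' by (simp add: fact_Suc algebra_simps)
  have e2: "(2::rat)^(2*m) = q" unfolding q_def by (simp add: power_mult)
  have es: "(-1::rat)^(m+1) = - s" unfolding s_def by simp
  have aux: "(-s)/q * ((2*a+2)*(2*a+1)*F/(G*((a+1)*a*G))) = -(2*a)*(2*a+1)*(s*(F/(a*G)^2)/q)"
  proof -
    have "(2*a+2)*(2*a+1)*F/(G*((a+1)*a*G)) = ((a+1) * (2*(2*a+1)*F))/((a+1)*(G*a*G))"
      by (simp add: algebra_simps)
    also have "\<dots> = 2*(2*a+1)*F/(G*a*G)" using a(2) by (rule mult_divide_mult_cancel_left)
    finally have c: "(2*a+2)*(2*a+1)*F/(G*((a+1)*a*G)) = 2*(2*a+1)*F/(G*a*G)" .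
    show ?thesis unfolding c using a G q by (simp add: field_simps power2_eq_square)
  qed
  have rhs: "(-1)^((p + 3) div 4) / 2^((p - 1) div 2) *
              (of_nat (fact ((p + 3) div 2) :: nat) /
               (of_nat (fact ((p - 5) div 4) :: nat) * of_nat (fact ((p + 3) div 4) :: nat))) = M2 (2*m)"
    unfolding d1 f1 f2 f3 e2 es T_even cbm aux s_def[symmetric] q_def[symmetric] a_def[symmetric] ..
  show "rat_cong p (\<Sum>k=0..(p - 1) div 2. of_nat (k^2 * (2*k choose k)^2) / 32^k)
             ((-1)^((p + 3) div 4) / 2^((p - 1) div 2) *
              (of_nat (fact ((p + 3) div 2)) /
               (of_nat (fact ((p - 5) div 4)) * of_nat (fact ((p + 3) div 4)))))
             (int p^2)"
    unfolding rhs unfolding d1(1) by (rule cg_imp_rat_cong[OF assms(1) cg])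
next
  assume h: "p mod 4 = 3"
  define m where "m = p div 4"
  have pm: "p = 4*m+3" using h div_mult_mod_eq[of p 4] unfolding m_def by linarith
  have d1: "(p - 1) div 2 = 2*m+1" "(p + 1) div 4 = m+1" "(p + 1) div 2 = 2*m+2"
    "(p - 3) div 4 = m" using pm by auto
  have cg: "cg p ((\<Sum>k=0..2*m+1. of_nat (k^2 * (2*k choose k)^2) / 32^k) - M2 (2*m+1))"
    using cong_main[OF assms, of "(p - 1) div 2"] d1(1) pm by simp
  define a :: rat where "a = of_nat m"
  define F :: rat where "F = fact (2*m)"
  define G :: rat where "G = fact m"
  define s :: rat where "s = (-1)^m"
  define q :: rat where "q = 4^m"
  have a: "a + 1 \<noteq> 0" unfolding a_def by (metis of_nat_Suc of_nat_neq_0 add.commute)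
  have G: "G \<noteq> 0" unfolding G_def by simp
  have q: "q \<noteq> 0" unfolding q_def by simp
  have f1: "(of_nat (fact (2*m+2)) :: rat) = (2*a+2)*(2*a+1)*F"
    unfolding a_def F_def by (simp add: fact_Suc algebra_simps numeral_2_eq_2)
  have f2: "(of_nat (fact (m+1)) :: rat) = (a+1)*G"
    unfolding a_def G_def by (simp add: fact_Suc algebra_simps)
  have f3: "(of_nat (fact m) :: rat) = G" unfolding G_def by simp
  have cbm: "cb m = F / G^2" unfolding cb_def F_def G_def ..
  have e2: "(2::rat)^(2*m+1) = 2*q" unfolding q_def by (simp add: power_mult)
  have es: "(-1::rat)^(m+1) = - s" unfolding s_def by simp
  have aux: "(-s)/(2*q) * ((2*a+2)*(2*a+1)*F/(G*((a+1)*G))) = -(2*a+1)*(s*(F/G^2)/q)"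
  proof -
    have "(2*a+2)*(2*a+1)*F/(G*((a+1)*G)) = ((a+1) * (2*(2*a+1)*F))/((a+1)*(G*G))"
      by (simp add: algebra_simps)
    also have "\<dots> = 2*(2*a+1)*F/(G*G)" using a by (rule mult_divide_mult_cancel_left)
    finally have c: "(2*a+2)*(2*a+1)*F/(G*((a+1)*G)) = 2*(2*a+1)*F/(G*G)" .
    show ?thesis unfolding c using a G q by (simp add: field_simps power2_eq_square)
  qed
  have rhs: "(-1)^((p + 1) div 4) / 2^((p - 1) div 2) *
              (of_nat (fact ((p + 1) div 2) :: nat) /
               (of_nat (fact ((p - 3) div 4) :: nat) * of_nat (fact ((p + 1) div 4) :: nat))) = M2 (2*m+1)"
    unfolding d1 f1 f2 f3 e2 es T_odd cbm aux s_def[symmetric] q_def[symmetric] a_def[symmetric] ..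
  show "rat_cong p (\<Sum>k=0..(p - 1) div 2. of_nat (k^2 * (2*k choose k)^2) / 32^k)
             ((-1)^((p + 1) div 4) / 2^((p - 1) div 2) *
              (of_nat (fact ((p + 1) div 2)) /
               (of_nat (fact ((p - 3) div 4)) * of_nat (fact ((p + 1) div 4)))))
             (int p^2)"
    unfolding rhs unfolding d1(1) by (rule cg_imp_rat_cong[OF assms(1) cg])
qed

end
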